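(* Let $F$ be a graph and let $(G,\varphi)$ and $(G,\psi)$ be two $k$-token reconstructions of $F$. Then $(G,\varphi)$ and $(G,\psi)$ are equivalent if and only if $\mathcal{R}_\varphi=\mathcal{R}_\psi$ or $\mathcal{R}_\varphi=\overline{\mathcal{R}_\psi}$.
   Context: $F_k(G)$ is the graph on the $k$-subsets of $V(G)$ in which $A,B$ are adjacent iff $A\triangle B$ is an edge of $G$. A $k$-token reconstruction of $F$ is a pair $(G',\varphi)$ with $\varphi$ an isomorphism $F\to F_k(G')$. For an isomorphism $s$ between graphs, $\iota(s)$ maps a $k$-set $A$ to $\{s(v):v\in A\}$; $\mathfrak{c}$ maps a $k$-subset $A$ of $V(G)$ to $V(G)\setminus A$. Two $k$-token reconstructions $(G,\varphi),(G,\psi)$ of $F$ are equivalent if there is $s\in\operatorname{Aut}(G)$ with $\psi=\iota(s)\circ\varphi$ or $\psi=\mathfrak{c}\circ\iota(s)\circ\varphi$. For $u\in V(G)$ let $\kappa_G(u,k)=\{A\in V(F_k(G)):u\in A\}$. For a reconstruction $(G,\varphi)$ let $\mathcal{R}_\varphi=\{\varphi^{-1}(\kappa_G(u,k)):u\in V(G)\}$, and for a family $\mathcal{R}$ of subsets of $V(F)$ let $\overline{\mathcal{R}}=\{V(F)\setminus X:X\in\mathcal{R}\}$. *)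

theory Defs
  imports Main
begin

type_synonym 'a graph = "'a set \<times> 'a set set"

definition verts :: "'a graph \<Rightarrow> 'a set" where "verts G = fst G"
definition edges :: "'a graph \<Rightarrow> 'a set set" where "edges G = snd G"

definition graph :: "'a graph \<Rightarrow> bool" where
  "graph G \<longleftrightarrow> finite (verts G) \<and>
     (\<forall>e\<in>edges G. e \<subseteq> verts G \<and> card e = 2)"

definition token_graph :: "nat \<Rightarrow> 'a graph \<Rightarrow> 'a set graph" where
  "token_graph k G =
     ({A. A \<subseteq> verts G \<and> card A = k},
      {{A, B} | A B. A \<subseteq> verts G \<and> card A = k \<and> B \<subseteq> verts G \<and> card B = k
                   \<and> (A - B) \<union> (B - A) \<in> edges G})"

definition graph_iso :: "'a graph \<Rightarrow> 'b graph \<Rightarrow> ('a \<Rightarrow> 'b) \<Rightarrow> bool" where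
  "graph_iso F H f \<longleftrightarrow> bij_betw f (verts F) (verts H) \<and>
     (\<forall>x\<in>verts F. \<forall>y\<in>verts F. {x, y} \<in> edges F \<longleftrightarrow> {f x, f y} \<in> edges H)"

definition graph_aut :: "'a graph \<Rightarrow> ('a \<Rightarrow> 'a) \<Rightarrow> bool" where
  "graph_aut G s \<longleftrightarrow> graph_iso G G s"

definition token_reconstruction :: "nat \<Rightarrow> 'a graph \<Rightarrow> 'b graph \<Rightarrow> ('a \<Rightarrow> 'b set) \<Rightarrow> bool" where
  "token_reconstruction k F G \<phi> \<longleftrightarrow> graph G \<and> graph_iso F (token_graph k G) \<phi>"

definition iota :: "('b \<Rightarrow> 'b) \<Rightarrow> 'b set \<Rightarrow> 'b set" where
  "iota s A = s ` A"

definition compl_set :: "'b graph \<Rightarrow> 'b set \<Rightarrow> 'b set" where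
  "compl_set G A = verts G - A"

definition equivalent_recon :: "'a graph \<Rightarrow> 'b graph \<Rightarrow> ('a \<Rightarrow> 'b set) \<Rightarrow> ('a \<Rightarrow> 'b set) \<Rightarrow> bool" where
  "equivalent_recon F G \<phi> \<psi> \<longleftrightarrow> (\<exists>s. graph_aut G s \<and>
      ((\<forall>x\<in>verts F. \<psi> x = iota s (\<phi> x)) \<or>
       (\<forall>x\<in>verts F. \<psi> x = compl_set G (iota s (\<phi> x)))))"

definition kappa :: "'b graph \<Rightarrow> 'b \<Rightarrow> nat \<Rightarrow> 'b set set" where
  "kappa G u k = {A. A \<in> verts (token_graph k G) \<and> u \<in> A}"

definition R_fam :: "nat \<Rightarrow> 'a graph \<Rightarrow> 'b graph \<Rightarrow> ('a \<Rightarrow> 'b set) \<Rightarrow> 'a set set" where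
  "R_fam k F G \<phi> = {{x \<in> verts F. \<phi> x \<in> kappa G u k} | u. u \<in> verts G}"

definition compl_fam :: "'a graph \<Rightarrow> 'a set set \<Rightarrow> 'a set set" where
  "compl_fam F R = {verts F - X | X. X \<in> R}"

end

theory Submission
  imports Defs
begin

lemma tok_verts: "verts (token_graph k G) = {A. A \<subseteq> verts G \<and> card A = k}"
  by (simp add: token_graph_def verts_def)

lemma tok_edge:
  assumes "A \<in> verts (token_graph k G)" "B \<in> verts (token_graph k G)"
  shows "{A,B} \<in> edges (token_graph k G) \<longleftrightarrow> (A-B)\<union>(B-A) \<in> edges G"
proof
  assume "{A,B} \<in> edges (token_graph k G)"
  then obtain A' B' where "{A,B} = {A',B'}" "(A'-B')\<union>(B'-A') \<in> edges G"
    unfolding token_graph_def edges_def by auto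
  then show "(A-B)\<union>(B-A) \<in> edges G" by (auto simp: doubleton_eq_iff Un_commute)
next
  assume "(A-B)\<union>(B-A) \<in> edges G"
  then show "{A,B} \<in> edges (token_graph k G)"
    using assms unfolding token_graph_def edges_def verts_def by auto
qed

lemma R_fam_eq:
  assumes "token_reconstruction k F G \<phi>"
  shows "R_fam k F G \<phi> = (\<lambda>u. {x\<in>verts F. u \<in> \<phi> x}) ` verts G"
proof -
  have "\<And>x. x \<in> verts F \<Longrightarrow> \<phi> x \<in> verts (token_graph k G)"
    using assms unfolding token_reconstruction_def graph_iso_def by (auto dest: bij_betwE)
  then show ?thesis unfolding R_fam_def kappa_def by auto
qed

lemma degen_eq:
  assumes "graph G" "k = 0 \<or> card (verts G) \<le> k"
    "A \<in> verts (token_graph k G)" "B \<in> verts (token_graph k G)"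
  shows "A = B"
proof -
  have fin: "finite (verts G)" using assms(1) by (simp add: graph_def)
  have A: "A \<subseteq> verts G" "card A = k" and B: "B \<subseteq> verts G" "card B = k"
    using assms(3,4) by (auto simp: tok_verts)
  show ?thesis
  proof (cases "k = 0")
    case True
    then show ?thesis using A B fin by (metis card_0_eq finite_subset)
  next
    case False
    then have "card (verts G) \<le> k" using assms(2) by auto
    then have "A = verts G" "B = verts G" using A B fin
      by (metis card_mono card_subset_eq le_antisym)+
    then show ?thesis by simp
  qed
qed

lemma sep_set:
  assumes "finite V" "0 < k" "k < card V" "u \<in> V" "v \<in> V" "u \<noteq> v"
  shows "\<exists>A. A \<subseteq> V \<and> card A = k \<and> u \<in> A \<and> v \<notin> A"
proof -
  have "card (V - {u,v}) = card V - 2" using assms by (simp add: card_Diff_subset)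
  then have "k - 1 \<le> card (V - {u,v})" using assms by linarith
  then obtain C where C: "C \<subseteq> V - {u,v}" "card C = k - 1"
    by (meson obtain_subset_with_card_n)
  have "finite C" using C assms(1) finite_subset by blast
  then have "card (insert u C) = k" using C assms(2) by (subst card_insert_disjoint) auto
  then show ?thesis using C assms by (intro exI[of _ "insert u C"]) auto
qed

lemma inj_X:
  assumes "token_reconstruction k F G \<phi>" "0 < k" "k < card (verts G)"
  shows "inj_on (\<lambda>u. {x\<in>verts F. u \<in> \<phi> x}) (verts G)"
proof (rule inj_onI, rule ccontr)
  fix u v assume uv: "u \<in> verts G" "v \<in> verts G" "{x\<in>verts F. u \<in> \<phi> x} = {x\<in>verts F. v \<in> \<phi> x}" "u \<noteq> v"
  have fin: "finite (verts G)" using assms(1) by (simp add: graph_def token_reconstruction_def)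
  obtain A where A: "A \<subseteq> verts G" "card A = k" "u \<in> A" "v \<notin> A"
    using sep_set[OF fin assms(2,3) uv(1,2,4)] by blast
  have bij: "bij_betw \<phi> (verts F) (verts (token_graph k G))"
    using assms(1) by (simp add: token_reconstruction_def graph_iso_def)
  have "A \<in> verts (token_graph k G)" using A by (simp add: tok_verts)
  then obtain x where "x \<in> verts F" "\<phi> x = A" using bij by (metis bij_betw_imp_surj_on imageE)
  then show False using uv(3) A by blast
qed

lemma aut_lemma:
  assumes rp: "token_reconstruction k F G \<phi>" and rq: "token_reconstruction k F G \<psi>"
    and k: "0 < k" "k < card (verts G)"
    and s: "bij_betw s (verts G) (verts G)"
    and f: "\<forall>x\<in>verts F. \<psi> x = f (\<phi> x)"
    and fd: "\<forall>A B. A \<subseteq> verts G \<longrightarrow> B \<subseteq> verts G \<longrightarrow> (f A - f B) \<union> (f B - f A) = s ` ((A-B)\<union>(B-A))"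
  shows "graph_aut G s"
  unfolding graph_aut_def graph_iso_def
proof (intro conjI s ballI)
  fix u v assume u: "u \<in> verts G" and v: "v \<in> verts G"
  have gG: "graph G" using rp by (simp add: token_reconstruction_def)
  have fin: "finite (verts G)" using gG by (simp add: graph_def)
  have noloop: "\<And>w. {w,w} \<notin> edges G" using gG unfolding graph_def by fastforce
  show "{u, v} \<in> edges G \<longleftrightarrow> {s u, s v} \<in> edges G"
  proof (cases "u = v")
    case True then show ?thesis using noloop by simp
  next
    case False
    obtain A where A: "A \<subseteq> verts G" "card A = k" "u \<in> A" "v \<notin> A"
      using sep_set[OF fin k u v False] by blast
    define B where "B = insert v (A - {u})"
    have finA: "finite A" using A fin finite_subset by blast
    have B: "B \<subseteq> verts G" "card B = k" using A v finA k unfolding B_def by auto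
    have AB: "(A-B)\<union>(B-A) = {u,v}" using A False unfolding B_def by auto
    have bp: "bij_betw \<phi> (verts F) (verts (token_graph k G))"
      and ep: "\<forall>x\<in>verts F. \<forall>y\<in>verts F. {x, y} \<in> edges F \<longleftrightarrow> {\<phi> x, \<phi> y} \<in> edges (token_graph k G)"
      using rp by (simp_all add: token_reconstruction_def graph_iso_def)
    have bq: "bij_betw \<psi> (verts F) (verts (token_graph k G))"
      and eq: "\<forall>x\<in>verts F. \<forall>y\<in>verts F. {x, y} \<in> edges F \<longleftrightarrow> {\<psi> x, \<psi> y} \<in> edges (token_graph k G)"
      using rq by (simp_all add: token_reconstruction_def graph_iso_def)
    have Av: "A \<in> verts (token_graph k G)" and Bv: "B \<in> verts (token_graph k G)"
      using A B by (simp_all add: tok_verts)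
    obtain x where x: "x \<in> verts F" "\<phi> x = A" using Av bp by (metis bij_betw_imp_surj_on imageE)
    obtain y where y: "y \<in> verts F" "\<phi> y = B" using Bv bp by (metis bij_betw_imp_surj_on imageE)
    have qx: "\<psi> x \<in> verts (token_graph k G)" "\<psi> y \<in> verts (token_graph k G)"
      using bq x y by (auto dest: bij_betwE)
    have "{u,v} \<in> edges G \<longleftrightarrow> {A,B} \<in> edges (token_graph k G)"
      using tok_edge[OF Av Bv] AB by simp
    also have "\<dots> \<longleftrightarrow> {x,y} \<in> edges F" using ep x y by auto
    also have "\<dots> \<longleftrightarrow> {\<psi> x, \<psi> y} \<in> edges (token_graph k G)" using eq x y by auto
    also have "\<dots> \<longleftrightarrow> (\<psi> x - \<psi> y) \<union> (\<psi> y - \<psi> x) \<in> edges G" using tok_edge[OF qx] .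
    also have "(\<psi> x - \<psi> y) \<union> (\<psi> y - \<psi> x) = s ` {u,v}"
      using f fd x y A(1) B(1) AB by metis
    finally show ?thesis by simp
  qed
qed

lemma inv_comp:
  assumes "inj_on X V" "inj_on Y V" "X ` V = Y ` V"
  shows "bij_betw (inv_into V Y \<circ> X) V V" "\<And>u. u \<in> V \<Longrightarrow> Y ((inv_into V Y \<circ> X) u) = X u"
proof -
  have bY: "bij_betw Y V (Y ` V)" using assms(2) by (simp add: bij_betw_imageI)
  have bX: "bij_betw X V (Y ` V)" using assms(1,3) by (simp add: bij_betw_imageI)
  show "bij_betw (inv_into V Y \<circ> X) V V"
    using bij_betw_trans[OF bX bij_betw_inv_into[OF bY]] .
  fix u assume "u \<in> V"
  then show "Y ((inv_into V Y \<circ> X) u) = X u" using assms(3)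
    by (metis comp_apply f_inv_into_f imageI)
qed

lemma sdiff_img:
  assumes "inj_on s V" "A \<subseteq> V" "B \<subseteq> V"
  shows "(s ` A - s ` B) \<union> (s ` B - s ` A) = s ` ((A-B)\<union>(B-A))"
proof -
  have "s ` (A - B) = s ` A - s ` B" "s ` (B - A) = s ` B - s ` A"
    using assms inj_on_image_set_diff[of s V] by blast+
  then show ?thesis by (simp add: image_Un)
qed

lemma csdiff_img:
  assumes "inj_on s V" "A \<subseteq> V" "B \<subseteq> V" "s ` V = V"
  shows "((V - s ` A) - (V - s ` B)) \<union> ((V - s ` B) - (V - s ` A)) = s ` ((A-B)\<union>(B-A))"
proof -
  have "s ` A \<subseteq> V" "s ` B \<subseteq> V" using assms by blast+
  then have "((V - s ` A) - (V - s ` B)) \<union> ((V - s ` B) - (V - s ` A)) = (s ` A - s ` B) \<union> (s ` B - s ` A)"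
    by blast
  then show ?thesis using sdiff_img[OF assms(1-3)] by simp
qed

theorem proposition13:
  fixes F :: "'a graph" and G :: "'b graph" and k :: nat
    and \<phi> \<psi> :: "'a \<Rightarrow> 'b set"
  assumes "graph F"
    and "token_reconstruction k F G \<phi>"
    and "token_reconstruction k F G \<psi>"
  shows "equivalent_recon F G \<phi> \<psi> \<longleftrightarrow>
           (R_fam k F G \<phi> = R_fam k F G \<psi> \<or> R_fam k F G \<phi> = compl_fam F (R_fam k F G \<psi>))"
proof -
  let ?V = "verts G" and ?VF = "verts F"
  define X where "X = (\<lambda>u. {x\<in>?VF. u \<in> \<phi> x})"
  define Y where "Y = (\<lambda>u. {x\<in>?VF. u \<in> \<psi> x})"
  have Rp: "R_fam k F G \<phi> = X ` ?V" using R_fam_eq[OF assms(2)] by (simp add: X_def)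
  have Rq: "R_fam k F G \<psi> = Y ` ?V" using R_fam_eq[OF assms(3)] by (simp add: Y_def)
  have gG: "graph G" using assms(2) by (simp add: token_reconstruction_def)
  have bp: "bij_betw \<phi> ?VF (verts (token_graph k G))"
    using assms(2) by (simp add: token_reconstruction_def graph_iso_def)
  have bq: "bij_betw \<psi> ?VF (verts (token_graph k G))"
    using assms(3) by (simp add: token_reconstruction_def graph_iso_def)
  have pT: "\<forall>x\<in>?VF. \<phi> x \<in> verts (token_graph k G)" using bp bij_betwE by blast
  have qT: "\<forall>x\<in>?VF. \<psi> x \<in> verts (token_graph k G)" using bq bij_betwE by blast
  have pV: "\<And>x. x \<in> ?VF \<Longrightarrow> \<phi> x \<subseteq> ?V" using pT by (simp add: tok_verts)
  have qV: "\<And>x. x \<in> ?VF \<Longrightarrow> \<psi> x \<subseteq> ?V" using qT by (simp add: tok_verts)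
  have CF: "compl_fam F (Y ` ?V) = (\<lambda>u. ?VF - Y u) ` ?V" unfolding compl_fam_def by auto
  show ?thesis
  proof
    assume "equivalent_recon F G \<phi> \<psi>"
    then obtain s where s: "graph_aut G s" and
      c: "(\<forall>x\<in>?VF. \<psi> x = iota s (\<phi> x)) \<or> (\<forall>x\<in>?VF. \<psi> x = compl_set G (iota s (\<phi> x)))"
      unfolding equivalent_recon_def by blast
    have sb: "bij_betw s ?V ?V" using s by (simp add: graph_aut_def graph_iso_def)
    have si: "inj_on s ?V" using sb bij_betw_imp_inj_on by blast
    have sV: "s ` ?V = ?V" using sb bij_betw_imp_surj_on by blast
    have mem: "\<And>x u. x \<in> ?VF \<Longrightarrow> u \<in> ?V \<Longrightarrow> s u \<in> s ` \<phi> x \<longleftrightarrow> u \<in> \<phi> x"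
      using inj_on_image_mem_iff[OF si] pV by blast
    from c show "R_fam k F G \<phi> = R_fam k F G \<psi> \<or> R_fam k F G \<phi> = compl_fam F (R_fam k F G \<psi>)"
    proof
      assume h: "\<forall>x\<in>?VF. \<psi> x = iota s (\<phi> x)"
      have "\<And>u. u \<in> ?V \<Longrightarrow> Y (s u) = X u"
        using h mem unfolding X_def Y_def iota_def by auto
      then have "(\<lambda>u. Y (s u)) ` ?V = X ` ?V" by (rule image_cong[OF refl])
      then have "Y ` ?V = X ` ?V" using sV by (simp add: image_image[symmetric])
      then show ?thesis using Rp Rq by simp
    next
      assume h: "\<forall>x\<in>?VF. \<psi> x = compl_set G (iota s (\<phi> x))"
      have "\<And>u. u \<in> ?V \<Longrightarrow> ?VF - Y (s u) = X u"
      proof -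
        fix u assume u: "u \<in> ?V"
        have su: "s u \<in> ?V" using u sV by blast
        show "?VF - Y (s u) = X u"
          using h mem[OF _ u] su unfolding X_def Y_def iota_def compl_set_def by auto
      qed
      then have e1: "(\<lambda>u. ?VF - Y (s u)) ` ?V = X ` ?V" by (rule image_cong[OF refl])
      have "(\<lambda>u. ?VF - Y u) ` ?V = (\<lambda>u. ?VF - Y u) ` (s ` ?V)" using sV by simp
      also have "\<dots> = (\<lambda>u. ?VF - Y (s u)) ` ?V" by (simp only: image_image)
      finally have "(\<lambda>u. ?VF - Y u) ` ?V = X ` ?V" using e1 by simp
      then show ?thesis using Rp Rq CF by simp
    qed
  next
    assume R: "R_fam k F G \<phi> = R_fam k F G \<psi> \<or> R_fam k F G \<phi> = compl_fam F (R_fam k F G \<psi>)"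
    show "equivalent_recon F G \<phi> \<psi>"
    proof (cases "k = 0 \<or> card ?V \<le> k")
      case True
      have "\<forall>x\<in>?VF. \<psi> x = iota id (\<phi> x)"
      proof
        fix x assume x: "x \<in> ?VF"
        have "\<psi> x = \<phi> x" using degen_eq[OF gG True, of "\<psi> x" "\<phi> x"] pT qT x by simp
        then show "\<psi> x = iota id (\<phi> x)" by (simp add: iota_def)
      qed
      moreover have "graph_aut G id" by (simp add: graph_aut_def graph_iso_def)
      ultimately show ?thesis unfolding equivalent_recon_def by (intro exI[of _ id] conjI disjI1)
    next
      case False
      then have k: "0 < k" "k < card ?V" by auto
      have iX: "inj_on X ?V" using inj_X[OF assms(2) k] by (simp add: X_def)
      have iY: "inj_on Y ?V" using inj_X[OF assms(3) k] by (simp add: Y_def)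
      from R show ?thesis
      proof
        assume "R_fam k F G \<phi> = R_fam k F G \<psi>"
        then have XY: "X ` ?V = Y ` ?V" using Rp Rq by simp
        define s where "s = inv_into ?V Y \<circ> X"
        have sb: "bij_betw s ?V ?V" unfolding s_def by (rule inv_comp(1)[OF iX iY XY])
        have sY: "Y (s u) = X u" if u: "u \<in> ?V" for u
          using inv_comp(2)[OF iX iY XY u] unfolding s_def comp_def .
        have "\<forall>x\<in>?VF. \<psi> x = s ` \<phi> x"
        proof
          fix x assume x: "x \<in> ?VF"
          show "\<psi> x = s ` \<phi> x"
          proof (rule set_eqI)
            fix v
            show "v \<in> \<psi> x \<longleftrightarrow> v \<in> s ` \<phi> x"
            proof
              assume v: "v \<in> \<psi> x"
              then have vV: "v \<in> ?V" using qV[OF x] by blast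
              have "v \<in> s ` ?V" using bij_betw_imp_surj_on[OF sb] vV by simp
              then obtain u where u: "u \<in> ?V" "s u = v" by blast
              have "x \<in> Y v" using v x by (simp add: Y_def)
              then have "x \<in> X u" using sY[OF u(1)] u(2) by simp
              then show "v \<in> s ` \<phi> x" using u by (auto simp: X_def)
            next
              assume "v \<in> s ` \<phi> x"
              then obtain u where u: "u \<in> \<phi> x" "v = s u" by blast
              have "u \<in> ?V" using u pV[OF x] by blast
              then have "Y v = X u" using sY u by simp
              then show "v \<in> \<psi> x" using u x by (auto simp: X_def Y_def)
            qed
          qed
        qed
        moreover have "graph_aut G s"
        proof -
          have si: "inj_on s ?V" using sb bij_betw_imp_inj_on by blast
          have fd: "\<forall>A B. A \<subseteq> ?V \<longrightarrow> B \<subseteq> ?V \<longrightarrow> (s ` A - s ` B) \<union> (s ` B - s ` A) = s ` ((A-B)\<union>(B-A))"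
          proof (intro allI impI)
            fix A B assume AB: "A \<subseteq> ?V" "B \<subseteq> ?V"
            show "(s ` A - s ` B) \<union> (s ` B - s ` A) = s ` ((A-B)\<union>(B-A))"
              using sdiff_img[OF si AB] .
          qed
          show ?thesis by (rule aut_lemma[OF assms(2,3) k sb calculation fd])
        qed
        ultimately show ?thesis unfolding equivalent_recon_def iota_def by (intro exI[of _ s] conjI disjI1)
      next
        assume "R_fam k F G \<phi> = compl_fam F (R_fam k F G \<psi>)"
        then have XY: "X ` ?V = (\<lambda>u. ?VF - Y u) ` ?V" using Rp Rq CF by simp
        have iY': "inj_on (\<lambda>u. ?VF - Y u) ?V"
        proof (rule inj_onI)
          fix u v assume uv: "u \<in> ?V" "v \<in> ?V" and e: "?VF - Y u = ?VF - Y v"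
          have s1: "Y u \<subseteq> ?VF" "Y v \<subseteq> ?VF" by (auto simp: Y_def)
          have "?VF - (?VF - Y u) = ?VF - (?VF - Y v)" using e by simp
          then have "Y u = Y v" using s1 by (simp add: Diff_Diff_Int inf.absorb2)
          then show "u = v" by (rule inj_onD[OF iY _ uv])
        qed
        define s where "s = inv_into ?V (\<lambda>u. ?VF - Y u) \<circ> X"
        have sb: "bij_betw s ?V ?V" unfolding s_def by (rule inv_comp(1)[OF iX iY' XY])
        have sY: "?VF - Y (s u) = X u" if u: "u \<in> ?V" for u
          using inv_comp(2)[OF iX iY' XY u] unfolding s_def comp_def .
        have "\<forall>x\<in>?VF. \<psi> x = ?V - s ` \<phi> x"
        proof
          fix x assume x: "x \<in> ?VF"
          show "\<psi> x = ?V - s ` \<phi> x"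
          proof (rule set_eqI)
            fix v
            show "v \<in> \<psi> x \<longleftrightarrow> v \<in> ?V - s ` \<phi> x"
            proof (cases "v \<in> ?V")
              case False then show ?thesis using qV[OF x] by auto
            next
              case vV: True
              have "v \<in> s ` ?V" using bij_betw_imp_surj_on[OF sb] vV by simp
              then obtain u where u: "u \<in> ?V" "s u = v" by blast
              have si: "inj_on s ?V" using sb bij_betw_imp_inj_on by blast
              have "v \<in> s ` \<phi> x \<longleftrightarrow> u \<in> \<phi> x" using inj_on_image_mem_iff[OF si u(1) pV[OF x]] u(2) by simp
              also have "\<dots> \<longleftrightarrow> x \<in> X u" using x by (simp add: X_def)
              also have "\<dots> \<longleftrightarrow> x \<notin> Y v" using sY[OF u(1)] u(2) x by auto
              also have "\<dots> \<longleftrightarrow> v \<notin> \<psi> x" by (simp add: Y_def x)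
              finally show ?thesis using vV by auto
            qed
          qed
        qed
        moreover have "graph_aut G s"
        proof -
          have si: "inj_on s ?V" using sb bij_betw_imp_inj_on by blast
          have sV2: "s ` ?V = ?V" using sb bij_betw_imp_surj_on by blast
          have fd: "\<forall>A B. A \<subseteq> ?V \<longrightarrow> B \<subseteq> ?V \<longrightarrow> ((?V - s ` A) - (?V - s ` B)) \<union> ((?V - s ` B) - (?V - s ` A)) = s ` ((A-B)\<union>(B-A))"
          proof (intro allI impI)
            fix A B assume AB: "A \<subseteq> ?V" "B \<subseteq> ?V"
            show "((?V - s ` A) - (?V - s ` B)) \<union> ((?V - s ` B) - (?V - s ` A)) = s ` ((A-B)\<union>(B-A))"
              using csdiff_img[OF si AB sV2] .
          qed
          show ?thesis by (rule aut_lemma[OF assms(2,3) k sb calculation fd])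
        qed
        ultimately show ?thesis unfolding equivalent_recon_def iota_def compl_set_def by (intro exI[of _ s] conjI disjI2)
      qed
    qed
  qed
qed

end
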